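(* Under the coupling $\bar\pi_{\Lambda_N}$ described in the context, $o\in\mathcal C^{\Lambda_N}$ only if $o$ is connected to $\partial\Lambda_N$ in $\mathcal C^{\Lambda_N}$, i.e. only if there is a nearest-neighbor path of vertices of $\mathcal C^{\Lambda_N}$ from $o$ to a vertex adjacent to $\partial\Lambda_N$.
   Context: Fix $\beta>0$ and a realization of the field $\{h_v\}$. $u\sim v$ if $|u-v|_1=1$; $\partial A=\{v\in\mathbb Z^2\setminus A:u\sim v\text{ for some }u\in A\}$; $\Lambda_N=\{v\in\mathbb Z^2:|v|_\infty\le N\}$; $o$ the origin. $\mu^{\Lambda_N,\pm}$ is the Ising measure on $\Lambda_N$ with weights $e^{-\beta H^{\Lambda_N,\pm}}$, $H^{\Lambda_N,\pm}(\sigma)=-\big(\sum_{u\sim v,\,u,v\in\Lambda_N}\sigma_u\sigma_v\pm\sum_{u\sim v,\,u\in\Lambda_N,v\in\partial\Lambda_N}\sigma_u+\sum_{u\in\Lambda_N}\sigma_uh_u\big)$. The coupling $\bar\pi_{\Lambda_N}$ of $(\sigma^{\Lambda_N,+},\sigma^{\Lambda_N,-})$ is built by sequentially sampling vertices: whenever a vertex $v$ is sampled, given the already-sampled set $V$ and spins on it, let $p_\pm=\mu^{\Lambda_N,\pm}(\sigma_v=1\mid\sigma^{\Lambda_N,\pm}_V)$; draw $U$ uniform on $[0,1]$ and set $\sigma^{\Lambda_N,\pm}_v=-1$ iff $U\le1-p_\pm$. The order of sampling is: $\mathcal C^{\Lambda_N}$ denotes the set of already-sampled $v$ with $\sigma^{\Lambda_N,+}_v>\sigma^{\Lambda_N,-}_v$;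 set $A_0=\partial\Lambda_N$; for $k=0,1,2,\ldots$, at stage $k+1$ set $A_{k+1}=\emptyset$; if $A_k=\emptyset$, sample all remaining unsampled vertices of $\Lambda_N$ in an arbitrary fixed order and stop; otherwise sample (in an arbitrary fixed order) all not-yet-sampled vertices of $\Lambda_N$ adjacent to $A_k$, and add each newly sampled vertex lying in $\mathcal C^{\Lambda_N}$ to $A_{k+1}$. At the end, $\mathcal C^{\Lambda_N}=\{v\in\Lambda_N:\sigma^{\Lambda_N,+}_v>\sigma^{\Lambda_N,-}_v\}$. *)

theory Defs
  imports Complex_Main
begin

type_synonym vtx = "int \<times> int"

definition adj :: "vtx \<Rightarrow> vtx \<Rightarrow> bool" where
  "adj u v \<longleftrightarrow> \<bar>fst u - fst v\<bar> + \<bar>snd u - snd v\<bar> = 1"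

definition bdry :: "vtx set \<Rightarrow> vtx set" where
  "bdry A = {v. v \<notin> A \<and> (\<exists>u\<in>A. adj u v)}"

definition Lam :: "nat \<Rightarrow> vtx set" where
  "Lam N = {v. \<bar>fst v\<bar> \<le> int N \<and> \<bar>snd v\<bar> \<le> int N}"

definition origin :: vtx where "origin = (0, 0)"

definition configs :: "nat \<Rightarrow> (vtx \<Rightarrow> real) set" where
  "configs N = {\<sigma>. (\<forall>u\<in>Lam N. \<sigma> u = 1 \<or> \<sigma> u = -1) \<and> (\<forall>u. u \<notin> Lam N \<longrightarrow> \<sigma> u = 0)}"

text \<open>Hamiltonian; s = 1 for plus, s = -1 for minus boundary condition.
  Internal edges are unordered pairs.\<close>
definition Ham :: "nat \<Rightarrow> real \<Rightarrow> (vtx \<Rightarrow> real) \<Rightarrow> (vtx \<Rightarrow> real) \<Rightarrow> real" where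
  "Ham N s h \<sigma> = - ((\<Sum>e\<in>{{u, v} | u v. u \<in> Lam N \<and> v \<in> Lam N \<and> adj u v}. \<Prod>w\<in>e. \<sigma> w)
      + s * (\<Sum>(u, v)\<in>{(u, v). u \<in> Lam N \<and> v \<in> bdry (Lam N) \<and> adj u v}. \<sigma> u)
      + (\<Sum>u\<in>Lam N. \<sigma> u * h u))"

definition weight :: "real \<Rightarrow> nat \<Rightarrow> real \<Rightarrow> (vtx \<Rightarrow> real) \<Rightarrow> (vtx \<Rightarrow> real) \<Rightarrow> real" where
  "weight \<beta> N s h \<sigma> = exp (- \<beta> * Ham N s h \<sigma>)"

definition condp :: "real \<Rightarrow> nat \<Rightarrow> real \<Rightarrow> (vtx \<Rightarrow> real) \<Rightarrow> vtx set \<Rightarrow> (vtx \<Rightarrow> real) \<Rightarrow> vtx \<Rightarrow> real" where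
  "condp \<beta> N s h V \<xi> v =
     (\<Sum>\<sigma>\<in>{\<sigma>\<in>configs N. (\<forall>u\<in>V. \<sigma> u = \<xi> u) \<and> \<sigma> v = 1}. weight \<beta> N s h \<sigma>)
     / (\<Sum>\<sigma>\<in>{\<sigma>\<in>configs N. \<forall>u\<in>V. \<sigma> u = \<xi> u}. weight \<beta> N s h \<sigma>)"

text \<open>State of the coupling: sampled set, plus/minus spins on it, number of uniforms used,
  current frontier A_k, stage index k, termination flag.\<close>
record cstate =
  Vs :: "vtx set"
  sp :: "vtx \<Rightarrow> real"
  sm :: "vtx \<Rightarrow> real"
  cnt :: nat
  Ak :: "vtx set"
  stg :: nat
  fin :: bool

definition sample1 :: "real \<Rightarrow> nat \<Rightarrow> (vtx \<Rightarrow> real) \<Rightarrow> (nat \<Rightarrow> real) \<Rightarrow> cstate \<Rightarrow> vtx \<Rightarrow> cstate" where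
  "sample1 \<beta> N h U st v =
     (let pp = condp \<beta> N 1 h (Vs st) (sp st) v;
          pm = condp \<beta> N (-1) h (Vs st) (sm st) v;
          x = U (cnt st)
      in st\<lparr>Vs := insert v (Vs st),
            sp := (sp st)(v := (if x \<le> 1 - pp then -1 else 1)),
            sm := (sm st)(v := (if x \<le> 1 - pm then -1 else 1)),
            cnt := Suc (cnt st)\<rparr>)"

definition sample_list :: "real \<Rightarrow> nat \<Rightarrow> (vtx \<Rightarrow> real) \<Rightarrow> (nat \<Rightarrow> real) \<Rightarrow> vtx list \<Rightarrow> cstate \<Rightarrow> cstate" where
  "sample_list \<beta> N h U vs st = fold (\<lambda>v s. sample1 \<beta> N h U s v) vs st"

text \<open>One stage of the exploration. pick k S is the (arbitrary, fixed) order in which the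
  finite set S is sampled at stage k.\<close>
definition stage :: "real \<Rightarrow> nat \<Rightarrow> (vtx \<Rightarrow> real) \<Rightarrow> (nat \<Rightarrow> real) \<Rightarrow> (nat \<Rightarrow> vtx set \<Rightarrow> vtx list)
     \<Rightarrow> cstate \<Rightarrow> cstate" where
  "stage \<beta> N h U pick st =
    (if fin st then st
     else if Ak st = {} then
       (let st' = sample_list \<beta> N h U (pick (Suc (stg st)) (Lam N - Vs st)) st
        in st'\<lparr>Ak := {}, stg := Suc (stg st), fin := True\<rparr>)
     else
       (let S = {v \<in> Lam N. v \<notin> Vs st \<and> (\<exists>a\<in>Ak st. adj a v)};
            st' = sample_list \<beta> N h U (pick (Suc (stg st)) S) st
        in st'\<lparr>Ak := {v \<in> S. sp st' v > sm st' v}, stg := Suc (stg st)\<rparr>))"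

definition init_state :: "nat \<Rightarrow> cstate" where
  "init_state N = \<lparr>Vs = {}, sp = (\<lambda>_. 0), sm = (\<lambda>_. 0), cnt = 0, Ak = bdry (Lam N), stg = 0, fin = False\<rparr>"

text \<open>The procedure terminates within card (Lam N) + 2 stages; further stages do nothing.\<close>
definition final_state :: "real \<Rightarrow> nat \<Rightarrow> (vtx \<Rightarrow> real) \<Rightarrow> (nat \<Rightarrow> real) \<Rightarrow> (nat \<Rightarrow> vtx set \<Rightarrow> vtx list) \<Rightarrow> cstate" where
  "final_state \<beta> N h U pick = (stage \<beta> N h U pick ^^ (card (Lam N) + 3)) (init_state N)"

definition Cset :: "real \<Rightarrow> nat \<Rightarrow> (vtx \<Rightarrow> real) \<Rightarrow> (nat \<Rightarrow> real) \<Rightarrow> (nat \<Rightarrow> vtx set \<Rightarrow> vtx list) \<Rightarrow> vtx set" where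
  "Cset \<beta> N h U pick =
     (let st = final_state \<beta> N h U pick in {v \<in> Lam N. sp st v > sm st v})"

end

theory Submission
  imports Defs "HOL-Library.FuncSet"
begin


lemma adj_sym: "adj u v = adj v u"
  unfolding adj_def by (simp add: abs_minus_commute add.commute)

lemma adj_irrefl: "\<not> adj u u"
  unfolding adj_def by simp

lemma Lam_eq: "Lam N = {- int N..int N} \<times> {- int N..int N}"
  unfolding Lam_def by (auto simp: abs_le_iff)

lemma finite_Lam[simp]: "finite (Lam N)"
  unfolding Lam_eq by simp

lemma bdry_sub: "bdry (Lam N) \<subseteq> Lam (Suc N)"
  unfolding bdry_def Lam_def adj_def by auto

lemma finite_bdry[simp]: "finite (bdry (Lam N))"
  using bdry_sub finite_Lam finite_subset by blast

lemma bdry_ne: "bdry (Lam N) \<noteq> {}"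
proof -
  have a: "(int N, 0) \<in> Lam N" "(int N + 1, 0) \<notin> Lam N" "adj (int N, 0) (int N + 1, 0)"
    unfolding Lam_def adj_def by auto
  have "(int N + 1, 0) \<in> bdry (Lam N)"
    unfolding bdry_def using a by blast
  then show ?thesis by blast
qed

lemma configs_sub: "configs N \<subseteq> (\<lambda>f u. if u \<in> Lam N then f u else 0) ` (Lam N \<rightarrow>\<^sub>E {-1, 1})"
proof
  fix \<sigma> assume s: "\<sigma> \<in> configs N"
  have "\<sigma> = (\<lambda>u. if u \<in> Lam N then restrict \<sigma> (Lam N) u else 0)"
    using s unfolding configs_def by auto
  moreover have "restrict \<sigma> (Lam N) \<in> Lam N \<rightarrow>\<^sub>E {-1, 1}"
    using s unfolding configs_def by auto
  ultimately show "\<sigma> \<in> (\<lambda>f u. if u \<in> Lam N then f u else 0) ` (Lam N \<rightarrow>\<^sub>E {-1, 1})"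
    by blast
qed

lemma finite_configs[simp]: "finite (configs N)"
  by (rule finite_subset[OF configs_sub]) (intro finite_imageI finite_PiE; simp)

definition Edg :: "nat \<Rightarrow> vtx set set" where
  "Edg N = {{u, v} | u v. u \<in> Lam N \<and> v \<in> Lam N \<and> adj u v}"

definition Prs :: "nat \<Rightarrow> (vtx \<times> vtx) set" where
  "Prs N = {(u, v). u \<in> Lam N \<and> v \<in> bdry (Lam N) \<and> adj u v}"

lemma finite_Edg: "finite (Edg N)"
proof -
  have "Edg N \<subseteq> Pow (Lam N)" unfolding Edg_def by auto
  then show ?thesis using finite_Pow_iff finite_Lam finite_subset by metis
qed

lemma finite_Prs: "finite (Prs N)"
proof -
  have "Prs N \<subseteq> Lam N \<times> bdry (Lam N)" unfolding Prs_def by auto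
  then show ?thesis using finite_subset by fastforce
qed

definition Esum :: "nat \<Rightarrow> (vtx \<Rightarrow> real) \<Rightarrow> real" where
  "Esum N \<sigma> = (\<Sum>e\<in>Edg N. \<Prod>w\<in>e. \<sigma> w)"
definition Bsum :: "nat \<Rightarrow> (vtx \<Rightarrow> real) \<Rightarrow> real" where
  "Bsum N \<sigma> = (\<Sum>(u, v)\<in>Prs N. \<sigma> u)"
definition Fsum :: "nat \<Rightarrow> (vtx \<Rightarrow> real) \<Rightarrow> (vtx \<Rightarrow> real) \<Rightarrow> real" where
  "Fsum N h \<sigma> = (\<Sum>u\<in>Lam N. \<sigma> u * h u)"

lemma Ham_alt: "Ham N s h \<sigma> = - (Esum N \<sigma> + s * Bsum N \<sigma> + Fsum N h \<sigma>)"
  unfolding Ham_def Esum_def Bsum_def Fsum_def Edg_def Prs_def by simp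

lemma Esum_flip:
  assumes w: "w \<in> Lam N"
  shows "Esum N \<sigma> = Esum N (\<sigma>(w := 0)) + \<sigma> w * (\<Sum>u\<in>{u\<in>Lam N. adj w u}. \<sigma> u)"
proof -
  let ?A = "{e\<in>Edg N. w \<in> e}" and ?B = "{e\<in>Edg N. w \<notin> e}"
  have fin: "finite ?A" "finite ?B" using finite_Edg by auto
  have fine: "\<And>e. e \<in> Edg N \<Longrightarrow> finite e" unfolding Edg_def by auto
  have eq: "Edg N = ?A \<union> ?B" by auto
  have split: "\<And>f. (\<Sum>e\<in>Edg N. f e) = (\<Sum>e\<in>?A. f e) + (\<Sum>e\<in>?B. f e)"
    by (subst eq, rule sum.union_disjoint) (use fin in auto)
  have B: "(\<Sum>e\<in>?B. \<Prod>x\<in>e. \<sigma> x) = (\<Sum>e\<in>?B. \<Prod>x\<in>e. (\<sigma>(w := 0)) x)"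
    by (rule sum.cong) (auto intro!: prod.cong)
  have A0: "(\<Sum>e\<in>?A. \<Prod>x\<in>e. (\<sigma>(w := 0)) x) = 0"
    by (rule sum.neutral) (use fine in \<open>auto intro!: prod_zero\<close>)
  let ?U = "{u\<in>Lam N. adj w u}"
  have Aeq: "?A = (\<lambda>u. {w, u}) ` ?U"
  proof
    show "?A \<subseteq> (\<lambda>u. {w, u}) ` ?U"
    proof
      fix e assume "e \<in> ?A"
      then obtain a b where e: "e = {a, b}" "a \<in> Lam N" "b \<in> Lam N" "adj a b" "w \<in> e"
        unfolding Edg_def by auto
      show "e \<in> (\<lambda>u. {w, u}) ` ?U"
      proof (cases "w = a")
        case True then show ?thesis using e by auto
      next
        case False then have "w = b" using e by auto
        then show ?thesis using e adj_sym[of a b] by (auto intro!: image_eqI[of _ _ a])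
      qed
    qed
  next
    show "(\<lambda>u. {w, u}) ` ?U \<subseteq> ?A"
      using w unfolding Edg_def by blast
  qed
  have inj: "inj_on (\<lambda>u. {w, u}) ?U"
    by (rule inj_onI) (auto simp: doubleton_eq_iff adj_irrefl)
  have A1: "(\<Sum>e\<in>?A. \<Prod>x\<in>e. \<sigma> x) = \<sigma> w * (\<Sum>u\<in>?U. \<sigma> u)"
  proof -
    have "(\<Sum>e\<in>?A. \<Prod>x\<in>e. \<sigma> x) = (\<Sum>u\<in>?U. \<Prod>x\<in>{w, u}. \<sigma> x)"
      unfolding Aeq by (rule sum.reindex[OF inj, unfolded comp_def])
    also have "\<dots> = (\<Sum>u\<in>?U. \<sigma> w * \<sigma> u)"
    proof (rule sum.cong[OF refl])
      fix u assume "u \<in> ?U"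
      then have "w \<noteq> u" using adj_irrefl[of u] by auto
      then show "(\<Prod>x\<in>{w, u}. \<sigma> x) = \<sigma> w * \<sigma> u" by simp
    qed
    finally show ?thesis by (simp add: sum_distrib_left)
  qed
  show ?thesis
    unfolding Esum_def split[of "\<lambda>e. \<Prod>x\<in>e. \<sigma> x"] split[of "\<lambda>e. \<Prod>x\<in>e. (\<sigma>(w := 0)) x"]
    using A0 A1 B by simp
qed

lemma Bsum_flip:
  "Bsum N \<sigma> = Bsum N (\<sigma>(w := 0)) + \<sigma> w * real (card {p\<in>Prs N. fst p = w})"
proof -
  let ?A = "{p\<in>Prs N. fst p = w}" and ?B = "{p\<in>Prs N. fst p \<noteq> w}"
  have fin: "finite ?A" "finite ?B" using finite_Prs by auto
  have eq: "Prs N = ?A \<union> ?B" by auto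
  have split: "\<And>f. (\<Sum>p\<in>Prs N. f p) = (\<Sum>p\<in>?A. f p) + (\<Sum>p\<in>?B. f p)"
    by (subst eq, rule sum.union_disjoint) (use fin in auto)
  have "Bsum N \<sigma> = (\<Sum>p\<in>Prs N. \<sigma> (fst p))" unfolding Bsum_def by (simp add: case_prod_beta)
  moreover have "Bsum N (\<sigma>(w := 0)) = (\<Sum>p\<in>Prs N. (\<sigma>(w := 0)) (fst p))"
    unfolding Bsum_def by (simp add: case_prod_beta)
  moreover have "(\<Sum>p\<in>?A. \<sigma> (fst p)) = (\<Sum>p\<in>?A. \<sigma> w)" by (rule sum.cong) auto
  moreover have "(\<Sum>p\<in>?A. (\<sigma>(w := 0)) (fst p)) = (\<Sum>p\<in>?A. 0)" by (rule sum.cong) auto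
  moreover have "(\<Sum>p\<in>?B. (\<sigma>(w := 0)) (fst p)) = (\<Sum>p\<in>?B. \<sigma> (fst p))" by (rule sum.cong) auto
  ultimately show ?thesis using split[of "\<lambda>p. \<sigma> (fst p)"] split[of "\<lambda>p. (\<sigma>(w := 0)) (fst p)"]
    by (simp add: mult.commute)
qed

lemma Fsum_flip:
  assumes "w \<in> Lam N"
  shows "Fsum N h \<sigma> = Fsum N h (\<sigma>(w := 0)) + \<sigma> w * h w"
proof -
  have "Fsum N h \<sigma> = \<sigma> w * h w + (\<Sum>u\<in>Lam N - {w}. \<sigma> u * h u)"
    unfolding Fsum_def using assms by (simp add: sum.remove)
  moreover have "Fsum N h (\<sigma>(w := 0)) = 0 + (\<Sum>u\<in>Lam N - {w}. \<sigma> u * h u)"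
    unfolding Fsum_def using assms by (simp add: sum.remove)
  ultimately show ?thesis by simp
qed

definition Lf :: "nat \<Rightarrow> real \<Rightarrow> (vtx \<Rightarrow> real) \<Rightarrow> (vtx \<Rightarrow> real) \<Rightarrow> vtx \<Rightarrow> real" where
  "Lf N s h \<sigma> w = (\<Sum>u\<in>{u\<in>Lam N. adj w u}. \<sigma> u) + s * real (card {p\<in>Prs N. fst p = w}) + h w"

lemma Ham_flip:
  assumes "w \<in> Lam N"
  shows "Ham N s h \<sigma> = Ham N s h (\<sigma>(w := 0)) - \<sigma> w * Lf N s h \<sigma> w"
  unfolding Ham_alt Lf_def
  using Esum_flip[OF assms, of \<sigma>] Bsum_flip[of N \<sigma> w] Fsum_flip[OF assms, of h \<sigma>]
  by (simp only: ring_distribs) (simp add: mult.commute mult.left_commute)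

lemma Lf_upd: "Lf N s h (\<sigma>(w := a)) w = Lf N s h \<sigma> w"
proof -
  have "(\<Sum>u\<in>{u\<in>Lam N. adj w u}. (\<sigma>(w := a)) u) = (\<Sum>u\<in>{u\<in>Lam N. adj w u}. \<sigma> u)"
    by (rule sum.cong) (auto simp: adj_irrefl)
  then show ?thesis unfolding Lf_def by simp
qed

lemma Ham_shift:
  "Ham N s (\<lambda>u. h u + \<delta> u) \<sigma> = Ham N s h \<sigma> - (\<Sum>u\<in>Lam N. \<sigma> u * \<delta> u)"
proof -
  have "Fsum N (\<lambda>u. h u + \<delta> u) \<sigma> = Fsum N h \<sigma> + (\<Sum>u\<in>Lam N. \<sigma> u * \<delta> u)"
    unfolding Fsum_def by (simp add: distrib_left sum.distrib)
  then show ?thesis unfolding Ham_alt by linarith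
qed

lemma Ham_s:
  "Ham N s h \<sigma> = Ham N s' h \<sigma> - (s - s') * Bsum N \<sigma>"
  unfolding Ham_alt by (simp add: left_diff_distrib)

definition outer :: "nat \<Rightarrow> vtx set" where
  "outer N = {x\<in>Lam N. \<exists>b\<in>bdry (Lam N). adj x b}"

lemma Bsum_cong:
  assumes "\<forall>u\<in>outer N. \<sigma> u = \<sigma>' u"
  shows "Bsum N \<sigma> = Bsum N \<sigma>'"
  unfolding Bsum_def
  by (rule sum.cong[OF refl]) (use assms in \<open>auto simp: Prs_def outer_def\<close>)

definition agr :: "nat \<Rightarrow> vtx set \<Rightarrow> (vtx \<Rightarrow> real) \<Rightarrow> (vtx \<Rightarrow> real) set" where
  "agr N V \<xi> = {\<sigma>\<in>configs N. \<forall>u\<in>V. \<sigma> u = \<xi> u}"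

definition Wt :: "real \<Rightarrow> nat \<Rightarrow> real \<Rightarrow> (vtx \<Rightarrow> real) \<Rightarrow> (vtx \<Rightarrow> real) set \<Rightarrow> real" where
  "Wt \<beta> N s h Q = (\<Sum>\<sigma>\<in>Q. weight \<beta> N s h \<sigma>)"

lemma finite_agr[simp]: "finite (agr N V \<xi>)"
  unfolding agr_def by simp

lemma condp_alt:
  "condp \<beta> N s h V \<xi> v = Wt \<beta> N s h {\<sigma>\<in>agr N V \<xi>. \<sigma> v = 1} / Wt \<beta> N s h (agr N V \<xi>)"
proof -
  have "{\<sigma>\<in>configs N. (\<forall>u\<in>V. \<sigma> u = \<xi> u) \<and> \<sigma> v = 1} = {\<sigma>\<in>agr N V \<xi>. \<sigma> v = 1}"
    unfolding agr_def by auto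
  then show ?thesis unfolding condp_def Wt_def agr_def by simp
qed

lemma weight_pos: "weight \<beta> N s h \<sigma> > 0"
  unfolding weight_def by simp

lemma Wt_nonneg: "Wt \<beta> N s h Q \<ge> 0"
  unfolding Wt_def by (rule sum_nonneg) (simp add: less_imp_le weight_pos)

lemma agr_ne:
  assumes "V \<subseteq> Lam N" "\<forall>u\<in>V. \<xi> u = 1 \<or> \<xi> u = -1"
  shows "(\<lambda>u. if u \<in> Lam N then (if u \<in> V then \<xi> u else 1) else 0) \<in> agr N V \<xi>"
  using assms unfolding agr_def configs_def by auto

lemma Wt_agr_pos:
  assumes "V \<subseteq> Lam N" "\<forall>u\<in>V. \<xi> u = 1 \<or> \<xi> u = -1"
  shows "Wt \<beta> N s h (agr N V \<xi>) > 0"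
  unfolding Wt_def
  by (rule sum_pos2[OF finite_agr agr_ne[OF assms]]) (auto simp: weight_pos less_imp_le)

lemma condp_transfer:
  assumes bij: "bij_betw f (agr N V \<xi>) (agr N V' \<xi>')"
    and val: "\<forall>\<sigma>\<in>agr N V \<xi>. f \<sigma> v' = \<sigma> v"
    and wt: "\<forall>\<sigma>\<in>agr N V \<xi>. weight \<beta> N s' h' (f \<sigma>) = c * weight \<beta> N s h \<sigma>"
    and c: "c > 0"
  shows "condp \<beta> N s' h' V' \<xi>' v' = condp \<beta> N s h V \<xi> v"
proof -
  have img: "f ` {\<sigma>\<in>agr N V \<xi>. \<sigma> v = 1} = {\<tau>\<in>agr N V' \<xi>'. \<tau> v' = 1}"
  proof
    show "f ` {\<sigma>\<in>agr N V \<xi>. \<sigma> v = 1} \<subseteq> {\<tau>\<in>agr N V' \<xi>'. \<tau> v' = 1}"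
      using bij val bij_betw_apply by fastforce
  next
    show "{\<tau>\<in>agr N V' \<xi>'. \<tau> v' = 1} \<subseteq> f ` {\<sigma>\<in>agr N V \<xi>. \<sigma> v = 1}"
    proof
      fix \<tau> assume t: "\<tau> \<in> {\<tau>\<in>agr N V' \<xi>'. \<tau> v' = 1}"
      then obtain \<sigma> where "\<sigma> \<in> agr N V \<xi>" "\<tau> = f \<sigma>"
        using bij unfolding bij_betw_def by auto
      then show "\<tau> \<in> f ` {\<sigma>\<in>agr N V \<xi>. \<sigma> v = 1}" using t val by auto
    qed
  qed
  have bij2: "bij_betw f {\<sigma>\<in>agr N V \<xi>. \<sigma> v = 1} {\<tau>\<in>agr N V' \<xi>'. \<tau> v' = 1}"
    by (rule bij_betw_subset[OF bij _ img]) auto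
  have d: "Wt \<beta> N s' h' (agr N V' \<xi>') = c * Wt \<beta> N s h (agr N V \<xi>)"
    unfolding Wt_def sum.reindex_bij_betw[OF bij, symmetric] sum_distrib_left
    using wt by (intro sum.cong) auto
  have n: "Wt \<beta> N s' h' {\<tau>\<in>agr N V' \<xi>'. \<tau> v' = 1} = c * Wt \<beta> N s h {\<sigma>\<in>agr N V \<xi>. \<sigma> v = 1}"
    unfolding Wt_def sum.reindex_bij_betw[OF bij2, symmetric] sum_distrib_left
    using wt by (intro sum.cong) auto
  show ?thesis unfolding condp_alt d n using c by simp
qed

lemma flipX:
  assumes w: "w \<in> V" and V: "V \<subseteq> Lam N" and v: "v \<notin> V"
  shows "condp \<beta> N s h V (\<xi>(w := 1)) v
       = condp \<beta> N s (\<lambda>u. h u + (if u \<in> Lam N - V \<and> adj w u then 2 else 0)) V (\<xi>(w := -1)) v"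
proof -
  define \<delta> where "\<delta> = (\<lambda>u. if u \<in> Lam N - V \<and> adj w u then 2 else (0::real))"
  have wL: "w \<in> Lam N" using w V by auto
  let ?U = "{u\<in>Lam N. adj w u}"
  define K where "K = -2 * ((\<Sum>u\<in>?U \<inter> V. \<xi> u) + s * real (card {p\<in>Prs N. fst p = w}) + h w)"
  have bij: "bij_betw (\<lambda>\<sigma>. \<sigma>(w := 1)) (agr N V (\<xi>(w := -1))) (agr N V (\<xi>(w := 1)))"
  proof (rule bij_betw_byWitness[where f'="\<lambda>\<sigma>. \<sigma>(w := -1)"])
    show "\<forall>a\<in>agr N V (\<xi>(w := - 1)). a(w := 1, w := - 1) = a"
      using w unfolding agr_def by (auto simp: fun_upd_idem)
    show "\<forall>a\<in>agr N V (\<xi>(w := 1)). a(w := - 1, w := 1) = a"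
      using w unfolding agr_def by (auto simp: fun_upd_idem)
    show "(\<lambda>\<sigma>. \<sigma>(w := 1)) ` agr N V (\<xi>(w := - 1)) \<subseteq> agr N V (\<xi>(w := 1))"
      using wL unfolding agr_def configs_def image_subset_iff by (simp del: split_paired_All; metis)
    show "(\<lambda>\<sigma>. \<sigma>(w := - 1)) ` agr N V (\<xi>(w := 1)) \<subseteq> agr N V (\<xi>(w := - 1))"
      using wL unfolding agr_def configs_def image_subset_iff by (simp del: split_paired_All; metis)
  qed
  have wt: "weight \<beta> N s h (\<sigma>(w := 1)) = exp (- \<beta> * K) * weight \<beta> N s (\<lambda>u. h u + \<delta> u) \<sigma>"
    if sa: "\<sigma> \<in> agr N V (\<xi>(w := -1))" for \<sigma>
  proof -
    have sw: "\<sigma> w = -1" using sa w unfolding agr_def by auto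
    have sV: "\<forall>u\<in>V - {w}. \<sigma> u = \<xi> u" using sa unfolding agr_def by auto
    have h1: "Ham N s h (\<sigma>(w := 1)) = Ham N s h (\<sigma>(w := 0)) - Lf N s h \<sigma> w"
      using Ham_flip[OF wL, of s h "\<sigma>(w := 1)"] Lf_upd[of N s h \<sigma> w 1] by simp
    have h2: "Ham N s h \<sigma> = Ham N s h (\<sigma>(w := 0)) + Lf N s h \<sigma> w"
      using Ham_flip[OF wL, of s h \<sigma>] sw by simp
    have sd: "(\<Sum>u\<in>Lam N. \<sigma> u * \<delta> u) = 2 * (\<Sum>u\<in>?U - V. \<sigma> u)"
    proof -
      have "(\<Sum>u\<in>Lam N. \<sigma> u * \<delta> u) = (\<Sum>u\<in>Lam N. if u \<in> ?U - V then 2 * \<sigma> u else 0)"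
        unfolding \<delta>_def by (rule sum.cong) auto
      also have "\<dots> = (\<Sum>u\<in>{u\<in>Lam N. u \<in> ?U - V}. 2 * \<sigma> u)"
        by (rule sum.inter_filter[symmetric]) simp
      also have "{u\<in>Lam N. u \<in> ?U - V} = ?U - V" by auto
      finally show ?thesis by (simp add: sum_distrib_left)
    qed
    have lf: "Lf N s h \<sigma> w = (\<Sum>u\<in>?U \<inter> V. \<xi> u) + (\<Sum>u\<in>?U - V. \<sigma> u)
               + s * real (card {p\<in>Prs N. fst p = w}) + h w"
    proof -
      have "(\<Sum>u\<in>?U. \<sigma> u) = (\<Sum>u\<in>?U \<inter> V. \<sigma> u) + (\<Sum>u\<in>?U - V. \<sigma> u)"
        by (rule sum.Int_Diff) simp
      moreover have "(\<Sum>u\<in>?U \<inter> V. \<sigma> u) = (\<Sum>u\<in>?U \<inter> V. \<xi> u)"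
        using sV adj_irrefl[of w] by (intro sum.cong) auto
      ultimately show ?thesis unfolding Lf_def by simp
    qed
    have "Ham N s h (\<sigma>(w := 1)) = Ham N s (\<lambda>u. h u + \<delta> u) \<sigma> + K"
      unfolding Ham_shift h1 h2 sd K_def using lf by simp
    then show ?thesis unfolding weight_def by (simp add: distrib_left exp_add[symmetric] algebra_simps)
  qed
  have val: "\<forall>\<sigma>\<in>agr N V (\<xi>(w := - 1)). (\<sigma>(w := 1)) v = \<sigma> v" using w v by auto
  have wt': "\<forall>\<sigma>\<in>agr N V (\<xi>(w := - 1)). weight \<beta> N s h (\<sigma>(w := 1)) = exp (- \<beta> * K) * weight \<beta> N s (\<lambda>u. h u + \<delta> u) \<sigma>"
    using wt by blast
  have "condp \<beta> N s h V (\<xi>(w := 1)) v = condp \<beta> N s (\<lambda>u. h u + \<delta> u) V (\<xi>(w := -1)) v"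
    by (rule condp_transfer[OF bij val wt']) simp
  then show ?thesis unfolding \<delta>_def .
qed

lemma weight_shift1:
  "weight \<beta> N s (h(w := h w + d)) \<sigma> = exp (\<beta> * d * (if w \<in> Lam N then \<sigma> w else 0)) * weight \<beta> N s h \<sigma>"
proof -
  have hh: "h(w := h w + d) = (\<lambda>u. h u + (if u = w then d else 0))" by auto
  have "(\<Sum>u\<in>Lam N. \<sigma> u * (if u = w then d else 0)) = (if w \<in> Lam N then \<sigma> w * d else 0)"
    by (simp add: if_distrib sum.delta cong: if_cong)
  then show ?thesis unfolding weight_def hh Ham_shift
    by (simp add: exp_add[symmetric] algebra_simps)
qed

lemma agr_ins: "w \<notin> V \<Longrightarrow> {\<sigma>\<in>agr N V \<xi>. \<sigma> w = a} = agr N (insert w V) (\<xi>(w := a))"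
  unfolding agr_def by auto

lemma frac_ineq:
  fixes x1 x2 y1 y2 a b :: real
  assumes "y1 > 0" "y2 > 0" "0 < b" "b \<le> a" "x2 * y1 \<le> x1 * y2"
  shows "(x1 + x2) / (y1 + y2) \<le> (a * x1 + b * x2) / (a * y1 + b * y2)"
proof -
  have p1: "y1 + y2 > 0" using assms by simp
  have p2: "a * y1 + b * y2 > 0" using assms by (simp add: add_pos_pos)
  have "(a - b) * (x1 * y2 - x2 * y1) \<ge> 0" using assms by (intro mult_nonneg_nonneg) auto
  then have "(x1 + x2) * (a * y1 + b * y2) \<le> (a * x1 + b * x2) * (y1 + y2)"
    by (simp add: algebra_simps)
  then show ?thesis using p1 p2 by (simp add: divide_le_eq le_divide_eq mult.commute)
qed

lemma Wt_shift_const: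
  assumes "w \<in> Lam N" "\<forall>\<sigma>\<in>Q. \<sigma> w = a"
  shows "Wt \<beta> N s (h(w := h w + d)) Q = exp (\<beta> * d * a) * Wt \<beta> N s h Q"
  unfolding Wt_def sum_distrib_left weight_shift1 using assms by (intro sum.cong) auto

lemma Wt_union:
  assumes "finite Q1" "finite Q2" "Q1 \<inter> Q2 = {}"
  shows "Wt \<beta> N s h (Q1 \<union> Q2) = Wt \<beta> N s h Q1 + Wt \<beta> N s h Q2"
  unfolding Wt_def using assms by (rule sum.union_disjoint)

lemma mono_h:
  assumes \<beta>: "\<beta> > 0"
  shows "card (Lam N - V) = n \<Longrightarrow> V \<subseteq> Lam N \<Longrightarrow> (\<forall>u\<in>V. \<xi> u = 1 \<or> \<xi> u = -1) \<Longrightarrow> v \<in> Lam N - V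
    \<Longrightarrow> finite F \<Longrightarrow> (\<forall>u. 0 \<le> \<delta> u) \<Longrightarrow> (\<forall>u. u \<notin> F \<longrightarrow> \<delta> u = 0)
    \<Longrightarrow> condp \<beta> N s h V \<xi> v \<le> condp \<beta> N s (\<lambda>u. h u + \<delta> u) V \<xi> v"
proof (induction n arbitrary: V \<xi> v h \<delta> F rule: less_induct)
  case (less n)
  note cardn = less.prems(1) and VL = less.prems(2) and xi = less.prems(3) and vR = less.prems(4)
  have single: "condp \<beta> N s g V \<xi> v \<le> condp \<beta> N s (g(w := g w + d)) V \<xi> v" if d: "0 \<le> d" for g w d
  proof (cases "w \<in> Lam N - V")
    case False
    define c where "c = exp (\<beta> * d * (if w \<in> Lam N then \<xi> w else 0))"
    have bij: "bij_betw id (agr N V \<xi>) (agr N V \<xi>)" by simp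
    have val: "\<forall>\<sigma>\<in>agr N V \<xi>. id \<sigma> v = \<sigma> v" by simp
    have wt: "\<forall>\<sigma>\<in>agr N V \<xi>. weight \<beta> N s (g(w := g w + d)) (id \<sigma>) = c * weight \<beta> N s g \<sigma>"
      using False unfolding c_def weight_shift1 agr_def by auto
    have "condp \<beta> N s (g(w := g w + d)) V \<xi> v = condp \<beta> N s g V \<xi> v"
      by (rule condp_transfer[OF bij val wt]) (simp add: c_def)
    then show ?thesis by simp
  next
    case True
    then have wL: "w \<in> Lam N" and wV: "w \<notin> V" by auto
    let ?A = "agr N V \<xi>"
    let ?A1 = "agr N (insert w V) (\<xi>(w := 1))" and ?A2 = "agr N (insert w V) (\<xi>(w := -1))"
    have A1: "?A1 = {\<sigma>\<in>?A. \<sigma> w = 1}" and A2: "?A2 = {\<sigma>\<in>?A. \<sigma> w = -1}"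
      using agr_ins[OF wV] by auto
    have Aeq: "?A = ?A1 \<union> ?A2"
      unfolding A1 A2 using wL unfolding agr_def configs_def by auto
    have Aneq: "{\<sigma>\<in>?A. \<sigma> v = 1} = {\<sigma>\<in>?A1. \<sigma> v = 1} \<union> {\<sigma>\<in>?A2. \<sigma> v = 1}"
      using Aeq by auto
    have disj: "?A1 \<inter> ?A2 = {}" unfolding A1 A2 by auto
    define X1 where "X1 = Wt \<beta> N s g {\<sigma>\<in>?A1. \<sigma> v = 1}"
    define X2 where "X2 = Wt \<beta> N s g {\<sigma>\<in>?A2. \<sigma> v = 1}"
    define Y1 where "Y1 = Wt \<beta> N s g ?A1"
    define Y2 where "Y2 = Wt \<beta> N s g ?A2"
    let ?g' = "g(w := g w + d)"
    have ins: "insert w V \<subseteq> Lam N" using VL wL by auto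
    have xi1: "\<forall>u\<in>insert w V. (\<xi>(w := 1)) u = 1 \<or> (\<xi>(w := 1)) u = -1" using xi by auto
    have xi2: "\<forall>u\<in>insert w V. (\<xi>(w := -1)) u = 1 \<or> (\<xi>(w := -1)) u = -1" using xi by auto
    have Y1p: "Y1 > 0" unfolding Y1_def by (rule Wt_agr_pos[OF ins xi1])
    have Y2p: "Y2 > 0" unfolding Y2_def by (rule Wt_agr_pos[OF ins xi2])
    have c1: "condp \<beta> N s g V \<xi> v = (X1 + X2) / (Y1 + Y2)"
      unfolding condp_alt X1_def X2_def Y1_def Y2_def Aneq
      by (subst Aeq, subst Wt_union, simp, simp, rule disj, subst Wt_union) (use disj in auto)
    have c2: "condp \<beta> N s ?g' V \<xi> v = (exp (\<beta> * d * 1) * X1 + exp (\<beta> * d * -1) * X2)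
                / (exp (\<beta> * d * 1) * Y1 + exp (\<beta> * d * -1) * Y2)"
    proof -
      have "condp \<beta> N s ?g' V \<xi> v = (Wt \<beta> N s ?g' {\<sigma>\<in>?A1. \<sigma> v = 1} + Wt \<beta> N s ?g' {\<sigma>\<in>?A2. \<sigma> v = 1})
                / (Wt \<beta> N s ?g' ?A1 + Wt \<beta> N s ?g' ?A2)"
        unfolding condp_alt Aneq
        by (subst Aeq, subst Wt_union, simp, simp, rule disj, subst Wt_union) (use disj in auto)
      also have "\<dots> = (exp (\<beta> * d * 1) * X1 + exp (\<beta> * d * -1) * X2)
                / (exp (\<beta> * d * 1) * Y1 + exp (\<beta> * d * -1) * Y2)"
        unfolding X1_def X2_def Y1_def Y2_def
        by (subst (1 2 3 4) Wt_shift_const[OF wL]) (auto simp: A1 A2)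
      finally show ?thesis .
    qed
    have key: "X2 * Y1 \<le> X1 * Y2"
    proof (cases "w = v")
      case True
      have e: "{\<sigma>\<in>?A2. \<sigma> v = 1} = {}" unfolding A2 using True by auto
      have "X2 = 0" unfolding X2_def Wt_def e by (rule sum.empty)
      moreover have "X1 \<ge> 0" unfolding X1_def by (rule Wt_nonneg)
      ultimately show ?thesis using Y2p by simp
    next
      case False
      have vR': "v \<in> Lam N - insert w V" using vR False by auto
      have lt: "card (Lam N - insert w V) < n"
        using cardn True by (metis Diff_insert card_Diff1_less finite_Diff finite_Lam)
      define \<delta>w where "\<delta>w = (\<lambda>u. if u \<in> Lam N - insert w V \<and> adj w u then 2 else (0::real))"
      have IH: "condp \<beta> N s g (insert w V) (\<xi>(w := -1)) v
               \<le> condp \<beta> N s (\<lambda>u. g u + \<delta>w u) (insert w V) (\<xi>(w := -1)) v"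
        by (rule less.IH[OF lt refl ins xi2 vR' finite_Lam]) (auto simp: \<delta>w_def)
      have fl: "condp \<beta> N s g (insert w V) ((\<xi>(w := -1))(w := 1)) v
               = condp \<beta> N s (\<lambda>u. g u + \<delta>w u) (insert w V) ((\<xi>(w := -1))(w := -1)) v"
        unfolding \<delta>w_def by (rule flipX) (use ins vR' in auto)
      have "X2 / Y2 \<le> X1 / Y1"
        using IH fl unfolding condp_alt X1_def X2_def Y1_def Y2_def by simp
      then show ?thesis using Y1p Y2p by (simp add: divide_le_eq le_divide_eq mult.commute)
    qed
    show ?thesis unfolding c1 c2
      by (rule frac_ineq[OF Y1p Y2p _ _ key]) (use d \<beta> in auto)
  qed
  have multi: "\<forall>\<delta>. (\<forall>u. 0 \<le> \<delta> u) \<longrightarrow> (\<forall>u. u \<notin> G \<longrightarrow> \<delta> u = 0)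
      \<longrightarrow> condp \<beta> N s h V \<xi> v \<le> condp \<beta> N s (\<lambda>u. h u + \<delta> u) V \<xi> v" if "finite G" for G
    using that
  proof (induction G rule: finite_induct)
    case empty
    show ?case
    proof (intro allI impI)
      fix \<delta> :: "vtx \<Rightarrow> real" assume "\<forall>u. u \<notin> {} \<longrightarrow> \<delta> u = 0"
      then have "(\<lambda>u. h u + \<delta> u) = h" by (simp del: split_paired_All)
      then show "condp \<beta> N s h V \<xi> v \<le> condp \<beta> N s (\<lambda>u. h u + \<delta> u) V \<xi> v" by simp
    qed
  next
    case (insert w G)
    show ?case
    proof (intro allI impI)
      fix \<delta> :: "vtx \<Rightarrow> real" assume p: "\<forall>u. 0 \<le> \<delta> u" "\<forall>u. u \<notin> insert w G \<longrightarrow> \<delta> u = 0"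
      define \<delta>' where "\<delta>' = \<delta>(w := 0)"
      have "condp \<beta> N s h V \<xi> v \<le> condp \<beta> N s (\<lambda>u. h u + \<delta>' u) V \<xi> v"
        using insert.IH p unfolding \<delta>'_def by auto
      also have "\<dots> \<le> condp \<beta> N s ((\<lambda>u. h u + \<delta>' u)(w := (\<lambda>u. h u + \<delta>' u) w + \<delta> w)) V \<xi> v"
        by (rule single) (use p(1) in blast)
      also have "(\<lambda>u. h u + \<delta>' u)(w := (\<lambda>u. h u + \<delta>' u) w + \<delta> w) = (\<lambda>u. h u + \<delta> u)"
        unfolding \<delta>'_def by auto
      finally show "condp \<beta> N s h V \<xi> v \<le> condp \<beta> N s (\<lambda>u. h u + \<delta> u) V \<xi> v" .
    qed
  qed
  show ?case using multi[OF less.prems(5)] less.prems(6,7) by blast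
qed

lemma condp_cong:
  assumes "\<forall>u\<in>V. \<xi> u = \<xi>' u"
  shows "condp \<beta> N s h V \<xi> v = condp \<beta> N s h V \<xi>' v"
proof -
  have "\<And>\<sigma>. (\<forall>u\<in>V. \<sigma> u = \<xi> u) = (\<forall>u\<in>V. \<sigma> u = \<xi>' u)" using assms by auto
  then show ?thesis unfolding condp_def by simp
qed



lemma stepG:
  assumes \<beta>: "\<beta> > 0" and VL: "V \<subseteq> Lam N" and vR: "v \<in> Lam N - V" and fD: "finite D"
  shows "\<forall>\<xi>. D \<subseteq> V \<longrightarrow> (\<forall>u\<in>V. \<xi> u = 1 \<or> \<xi> u = -1) \<longrightarrow> (\<forall>u\<in>V. \<xi>' u = 1 \<or> \<xi>' u = -1)
     \<longrightarrow> (\<forall>u\<in>V - D. \<xi> u = \<xi>' u)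
     \<longrightarrow> (\<forall>w\<in>D. (\<xi> w = -1 \<and> \<xi>' w = 1) \<or> \<xi> w = \<xi>' w \<or> \<not> (\<exists>x\<in>Lam N - V. adj w x))
     \<longrightarrow> condp \<beta> N s h V \<xi> v \<le> condp \<beta> N s h V \<xi>' v"
  using fD
proof (induction D rule: finite_induct)
  case empty
  show ?case using condp_cong by (metis Diff_empty order_refl)
next
  case (insert w D)
  show ?case
  proof (intro allI impI)
    fix \<xi> assume a1: "insert w D \<subseteq> V" and a2: "\<forall>u\<in>V. \<xi> u = 1 \<or> \<xi> u = -1"
      and a3: "\<forall>u\<in>V. \<xi>' u = 1 \<or> \<xi>' u = -1" and a4: "\<forall>u\<in>V - insert w D. \<xi> u = \<xi>' u"
      and a5: "\<forall>w'\<in>insert w D. (\<xi> w' = -1 \<and> \<xi>' w' = 1) \<or> \<xi> w' = \<xi>' w' \<or> \<not> (\<exists>x\<in>Lam N - V. adj w' x)"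
    define \<xi>1 where "\<xi>1 = \<xi>(w := \<xi>' w)"
    have wV: "w \<in> V" using a1 by auto
    have c1: "D \<subseteq> V" using a1 by auto
    have c2: "\<forall>u\<in>V. \<xi>1 u = 1 \<or> \<xi>1 u = - 1" using a2 a3 wV unfolding \<xi>1_def by auto
    have c4: "\<forall>u\<in>V - D. \<xi>1 u = \<xi>' u" using a4 unfolding \<xi>1_def by auto
    have c5: "\<forall>w\<in>D. \<xi>1 w = - 1 \<and> \<xi>' w = 1 \<or> \<xi>1 w = \<xi>' w \<or> \<not> (\<exists>x\<in>Lam N - V. adj w x)"
      using a5 insert.hyps(2) unfolding \<xi>1_def by auto
    have "condp \<beta> N s h V \<xi>1 v \<le> condp \<beta> N s h V \<xi>' v"
      using insert.IH[THEN spec, of \<xi>1] c1 c2 a3 c4 c5 by blast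
    moreover have "condp \<beta> N s h V \<xi> v \<le> condp \<beta> N s h V \<xi>1 v"
    proof -
      define \<delta> where "\<delta> = (\<lambda>u. if u \<in> Lam N - V \<and> adj w u then 2 else (0::real))"
      have fl: "condp \<beta> N s h V (\<xi>(w := 1)) v = condp \<beta> N s (\<lambda>u. h u + \<delta> u) V (\<xi>(w := -1)) v"
        unfolding \<delta>_def by (rule flipX[OF wV VL]) (use vR in auto)
      define P where "P = (\<exists>x\<in>Lam N - V. adj w x)"
      have p1: "\<xi> w = 1 \<or> \<xi> w = -1" using a2 wV by blast
      have p2: "\<xi>' w = 1 \<or> \<xi>' w = -1" using a3 wV by blast
      have p3: "(\<xi> w = -1 \<and> \<xi>' w = 1) \<or> \<xi> w = \<xi>' w \<or> \<not> P" using a5 unfolding P_def by blast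
      consider "\<xi> w = \<xi>' w" | "\<xi> w = -1 \<and> \<xi>' w = 1" | "\<xi> w = 1 \<and> \<xi>' w = -1 \<and> \<not> P"
        using p1 p2 p3 by auto
      then show ?thesis
      proof cases
        case 1 then show ?thesis unfolding \<xi>1_def using 1[symmetric] by simp
      next
        case 2
        have e1: "\<xi>(w := -1) = \<xi>" using 2 by (simp add: fun_upd_idem)
        have e2: "\<xi>1 = \<xi>(w := 1)" using 2 unfolding \<xi>1_def by simp
        have "condp \<beta> N s h V (\<xi>(w := -1)) v \<le> condp \<beta> N s (\<lambda>u. h u + \<delta> u) V (\<xi>(w := -1)) v"
          by (rule mono_h[OF \<beta> refl VL _ vR finite_Lam]) (use a2 in \<open>auto simp: \<delta>_def\<close>)
        then show ?thesis using fl e1 e2 by simp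
      next
        case 3
        have d0: "(\<lambda>u. h u + \<delta> u) = h"
        proof
          fix u
          have "\<not> (u \<in> Lam N - V \<and> adj w u)" using 3 unfolding P_def by blast
          then show "h u + \<delta> u = h u" unfolding \<delta>_def by simp
        qed
        have e1: "\<xi>(w := 1) = \<xi>" using 3 by (simp add: fun_upd_idem)
        have e2: "\<xi>1 = \<xi>(w := -1)" using 3 unfolding \<xi>1_def by simp
        show ?thesis using fl e1 e2 d0 by simp
      qed
    qed
    ultimately show "condp \<beta> N s h V \<xi> v \<le> condp \<beta> N s h V \<xi>' v" by linarith
  qed
qed

lemma keyK:
  assumes \<beta>: "\<beta> > 0" and VL: "V \<subseteq> Lam N"
    and xp: "\<forall>u\<in>V. \<xi>p u = 1 \<or> \<xi>p u = -1" and xm: "\<forall>u\<in>V. \<xi>m u = 1 \<or> \<xi>m u = -1"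
    and out: "outer N \<subseteq> V"
    and sep: "\<forall>u\<in>V. (\<exists>x\<in>Lam N - V. adj u x) \<longrightarrow> \<xi>p u \<le> \<xi>m u"
    and vR: "v \<in> Lam N - V"
  shows "condp \<beta> N 1 h V \<xi>p v \<le> condp \<beta> N (-1) h V \<xi>m v"
proof -
  define c where "c = exp (2 * \<beta> * Bsum N \<xi>p)"
  have bij: "bij_betw id (agr N V \<xi>p) (agr N V \<xi>p)" by simp
  have val: "\<forall>\<sigma>\<in>agr N V \<xi>p. id \<sigma> v = \<sigma> v" by simp
  have wt: "\<forall>\<sigma>\<in>agr N V \<xi>p. weight \<beta> N 1 h (id \<sigma>) = c * weight \<beta> N (-1) h \<sigma>"
  proof
    fix \<sigma> assume "\<sigma> \<in> agr N V \<xi>p"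
    then have "Bsum N \<sigma> = Bsum N \<xi>p" using out unfolding agr_def by (intro Bsum_cong) blast
    then have eq: "Ham N 1 h \<sigma> = Ham N (-1) h \<sigma> - 2 * Bsum N \<xi>p" using Ham_s[of N 1 h \<sigma> "-1"] by simp
    have "- \<beta> * Ham N 1 h \<sigma> = 2 * \<beta> * Bsum N \<xi>p + - \<beta> * Ham N (-1) h \<sigma>"
      unfolding eq by (simp add: algebra_simps)
    then show "weight \<beta> N 1 h (id \<sigma>) = c * weight \<beta> N (-1) h \<sigma>"
      unfolding weight_def c_def by (simp add: exp_add[symmetric])
  qed
  have "condp \<beta> N 1 h V \<xi>p v = condp \<beta> N (-1) h V \<xi>p v"
    by (rule condp_transfer[OF bij val wt]) (simp add: c_def)
  also have "\<dots> \<le> condp \<beta> N (-1) h V \<xi>m v"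
  proof -
    have f1: "finite V" by (rule finite_subset[OF VL finite_Lam])
    have f5: "\<forall>w\<in>V. \<xi>p w = - 1 \<and> \<xi>m w = 1 \<or> \<xi>p w = \<xi>m w \<or> \<not> (\<exists>x\<in>Lam N - V. adj w x)"
    proof
      fix w assume w: "w \<in> V"
      show "\<xi>p w = - 1 \<and> \<xi>m w = 1 \<or> \<xi>p w = \<xi>m w \<or> \<not> (\<exists>x\<in>Lam N - V. adj w x)"
      proof (cases "\<exists>x\<in>Lam N - V. adj w x")
        case True
        then have le: "\<xi>p w \<le> \<xi>m w" using sep w by blast
        have "\<xi>p w = 1 \<or> \<xi>p w = -1" "\<xi>m w = 1 \<or> \<xi>m w = -1" using xp xm w by auto
        then show ?thesis using le by (elim disjE) auto
      qed simp
    qed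
    have f4: "\<forall>u\<in>V - V. \<xi>p u = \<xi>m u" by simp
    show ?thesis using stepG[OF \<beta> VL vR f1, of \<xi>m "-1" h, THEN spec, of \<xi>p] f4 f5 xp xm by blast
  qed
  finally show ?thesis .
qed



declare split_paired_All[simp del] split_paired_Ex[simp del] split_paired_all[simp del]

definition Cst :: "cstate \<Rightarrow> vtx set" where
  "Cst st = {u \<in> Vs st. sp st u > sm st u}"

definition haspath :: "nat \<Rightarrow> vtx set \<Rightarrow> vtx \<Rightarrow> bool" where
  "haspath N S u \<longleftrightarrow> (\<exists>p. p \<noteq> [] \<and> hd p = u \<and> set p \<subseteq> S
           \<and> (\<forall>i. Suc i < length p \<longrightarrow> adj (p ! i) (p ! Suc i))
           \<and> (\<exists>w\<in>bdry (Lam N). adj (last p) w))"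

lemma haspath_mono: "S \<subseteq> S' \<Longrightarrow> haspath N S u \<Longrightarrow> haspath N S' u"
  unfolding haspath_def by blast

lemma haspath_base: "u \<in> S \<Longrightarrow> b \<in> bdry (Lam N) \<Longrightarrow> adj u b \<Longrightarrow> haspath N S u"
  unfolding haspath_def by (rule exI[of _ "[u]"]) auto

lemma haspath_cons:
  assumes "v \<in> S" "adj v a" "haspath N S a"
  shows "haspath N S v"
proof -
  obtain p where p: "p \<noteq> []" "hd p = a" "set p \<subseteq> S"
    "\<forall>i. Suc i < length p \<longrightarrow> adj (p ! i) (p ! Suc i)" "\<exists>w\<in>bdry (Lam N). adj (last p) w"
    using assms(3) unfolding haspath_def by blast
  have ch: "\<forall>i. Suc i < length (v # p) \<longrightarrow> adj ((v # p) ! i) ((v # p) ! Suc i)"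
  proof (intro allI impI)
    fix i assume i: "Suc i < length (v # p)"
    show "adj ((v # p) ! i) ((v # p) ! Suc i)"
    proof (cases i)
      case 0
      then show ?thesis using p(1,2) assms(2) by (simp add: hd_conv_nth)
    next
      case (Suc j)
      then show ?thesis using p(4) i by simp
    qed
  qed
  show ?thesis unfolding haspath_def
    by (rule exI[of _ "v # p"]) (use p assms(1) ch in auto)
qed

lemma sample1_simps:
  "Vs (sample1 \<beta> N h U st v) = insert v (Vs st)"
  "sp (sample1 \<beta> N h U st v) = (sp st)(v := (if U (cnt st) \<le> 1 - condp \<beta> N 1 h (Vs st) (sp st) v then -1 else 1))"
  "sm (sample1 \<beta> N h U st v) = (sm st)(v := (if U (cnt st) \<le> 1 - condp \<beta> N (-1) h (Vs st) (sm st) v then -1 else 1))"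
  "Ak (sample1 \<beta> N h U st v) = Ak st"
  "fin (sample1 \<beta> N h U st v) = fin st"
  "stg (sample1 \<beta> N h U st v) = stg st"
  unfolding sample1_def Let_def by simp_all

lemma sample_list_Cons: "sample_list \<beta> N h U (v # L) st = sample_list \<beta> N h U L (sample1 \<beta> N h U st v)"
  unfolding sample_list_def by simp

lemma SL:
  "distinct L \<Longrightarrow> set L \<inter> Vs st = {} \<Longrightarrow>
    Vs (sample_list \<beta> N h U L st) = Vs st \<union> set L
  \<and> (\<forall>u. u \<notin> set L \<longrightarrow> sp (sample_list \<beta> N h U L st) u = sp st u \<and> sm (sample_list \<beta> N h U L st) u = sm st u)
  \<and> (\<forall>u\<in>set L. (sp (sample_list \<beta> N h U L st) u = 1 \<or> sp (sample_list \<beta> N h U L st) u = -1)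
         \<and> (sm (sample_list \<beta> N h U L st) u = 1 \<or> sm (sample_list \<beta> N h U L st) u = -1))
  \<and> Ak (sample_list \<beta> N h U L st) = Ak st \<and> fin (sample_list \<beta> N h U L st) = fin st"
proof (induction L arbitrary: st)
  case Nil
  then show ?case by (simp add: sample_list_def)
next
  case (Cons v L)
  let ?st1 = "sample1 \<beta> N h U st v"
  have "distinct L" "set L \<inter> Vs ?st1 = {}" using Cons.prems by (auto simp: sample1_simps)
  note IH = Cons.IH[OF this]
  show ?case unfolding sample_list_Cons using IH Cons.prems by (auto simp: sample1_simps)
qed


lemma SLF:
  assumes \<beta>: "\<beta> > 0"
  shows "set L \<subseteq> Lam N - Vs st \<Longrightarrow> distinct L \<Longrightarrow> Vs st \<subseteq> Lam N
   \<Longrightarrow> (\<forall>u\<in>Vs st. (sp st u = 1 \<or> sp st u = -1) \<and> (sm st u = 1 \<or> sm st u = -1))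
   \<Longrightarrow> outer N \<subseteq> Vs st
   \<Longrightarrow> (\<forall>u\<in>Vs st. (\<exists>x\<in>Lam N - Vs st. adj u x) \<longrightarrow> sp st u \<le> sm st u)
   \<Longrightarrow> \<forall>u\<in>set L. sp (sample_list \<beta> N h U L st) u \<le> sm (sample_list \<beta> N h U L st) u"
proof (induction L arbitrary: st)
  case Nil
  then show ?case by simp
next
  case (Cons v L)
  let ?st1 = "sample1 \<beta> N h U st v"
  have vR: "v \<in> Lam N - Vs st" using Cons.prems(1) by simp
  have pp: "condp \<beta> N 1 h (Vs st) (sp st) v \<le> condp \<beta> N (-1) h (Vs st) (sm st) v"
    by (rule keyK[OF \<beta> Cons.prems(3) _ _ Cons.prems(5,6) vR]) (use Cons.prems(4) in auto)
  have v1: "sp ?st1 v \<le> sm ?st1 v"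
    unfolding sample1_simps using pp by auto
  have p1: "set L \<subseteq> Lam N - Vs ?st1" "distinct L" "Vs ?st1 \<subseteq> Lam N"
    using Cons.prems(1,2,3) by (auto simp: sample1_simps)
  have p2: "\<forall>u\<in>Vs ?st1. (sp ?st1 u = 1 \<or> sp ?st1 u = -1) \<and> (sm ?st1 u = 1 \<or> sm ?st1 u = -1)"
    using Cons.prems(4) by (auto simp: sample1_simps)
  have p3: "outer N \<subseteq> Vs ?st1" using Cons.prems(5) by (auto simp: sample1_simps)
  have p4: "\<forall>u\<in>Vs ?st1. (\<exists>x\<in>Lam N - Vs ?st1. adj u x) \<longrightarrow> sp ?st1 u \<le> sm ?st1 u"
  proof (intro ballI impI)
    fix u assume u: "u \<in> Vs ?st1" and ex: "\<exists>x\<in>Lam N - Vs ?st1. adj u x"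
    show "sp ?st1 u \<le> sm ?st1 u"
    proof (cases "u = v")
      case True then show ?thesis using v1 by simp
    next
      case False
      then have "u \<in> Vs st" "\<exists>x\<in>Lam N - Vs st. adj u x" using u ex by (auto simp: sample1_simps)
      then show ?thesis using Cons.prems(6) False by (auto simp: sample1_simps)
    qed
  qed
  have IH: "\<forall>u\<in>set L. sp (sample_list \<beta> N h U L ?st1) u \<le> sm (sample_list \<beta> N h U L ?st1) u"
    by (rule Cons.IH[OF p1 p2 p3 p4])
  have dis: "set L \<inter> Vs ?st1 = {}" using p1(1) by auto
  have vL: "v \<notin> set L" using Cons.prems(2) by simp
  have "sp (sample_list \<beta> N h U L ?st1) v = sp ?st1 v" "sm (sample_list \<beta> N h U L ?st1) v = sm ?st1 v"
    using SL[OF p1(2) dis] vL by auto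
  then show ?case unfolding sample_list_Cons using IH v1 by auto
qed

definition Inv :: "nat \<Rightarrow> cstate \<Rightarrow> bool" where
  "Inv N st \<longleftrightarrow> Vs st \<subseteq> Lam N
    \<and> (\<forall>u\<in>Vs st. (sp st u = 1 \<or> sp st u = -1) \<and> (sm st u = 1 \<or> sm st u = -1))
    \<and> (\<forall>u. u \<notin> Vs st \<longrightarrow> sp st u = 0 \<and> sm st u = 0)
    \<and> (\<forall>u\<in>Cst st. haspath N (Cst st) u)
    \<and> (\<not> fin st \<longrightarrow> (Vs st = {} \<and> Ak st = bdry (Lam N))
         \<or> (outer N \<subseteq> Vs st \<and> Ak st \<subseteq> Cst st \<and> (\<forall>u\<in>Cst st. u \<in> Ak st \<or> (\<forall>x\<in>Lam N. adj u x \<longrightarrow> x \<in> Vs st))))"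

lemma Inv_init: "Inv N (init_state N)"
  unfolding Inv_def init_state_def Cst_def by simp


lemma Inv_stage:
  assumes \<beta>: "\<beta> > 0" and pk: "\<forall>k S. finite S \<longrightarrow> distinct (pick k S) \<and> set (pick k S) = S"
    and I: "Inv N st"
  shows "Inv N (stage \<beta> N h U pick st)"
proof -
  note I' = I[unfolded Inv_def]
  have VL: "Vs st \<subseteq> Lam N" and pm: "\<forall>u\<in>Vs st. (sp st u = 1 \<or> sp st u = -1) \<and> (sm st u = 1 \<or> sm st u = -1)"
    and z: "\<forall>u. u \<notin> Vs st \<longrightarrow> sp st u = 0 \<and> sm st u = 0"
    and pa: "\<forall>u\<in>Cst st. haspath N (Cst st) u"
    and fr: "\<not> fin st \<longrightarrow> (Vs st = {} \<and> Ak st = bdry (Lam N))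
         \<or> (outer N \<subseteq> Vs st \<and> Ak st \<subseteq> Cst st \<and> (\<forall>u\<in>Cst st. u \<in> Ak st \<or> (\<forall>x\<in>Lam N. adj u x \<longrightarrow> x \<in> Vs st)))"
    using I' by blast+
  show ?thesis
  proof (cases "fin st")
    case True
    then show ?thesis using I by (simp add: stage_def)
  next
    case nf: False
    show ?thesis
    proof (cases "Ak st = {}")
      case True
      have c2: "outer N \<subseteq> Vs st" "\<forall>u\<in>Cst st. (\<forall>x\<in>Lam N. adj u x \<longrightarrow> x \<in> Vs st)"
        using fr nf True bdry_ne by auto
      define L where "L = pick (Suc (stg st)) (Lam N - Vs st)"
      have Lp: "distinct L" "set L = Lam N - Vs st" using pk unfolding L_def by auto
      define st' where "st' = sample_list \<beta> N h U L st"
      have dis: "set L \<inter> Vs st = {}" using Lp by auto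
      have S: "Vs st' = Vs st \<union> set L"
        "\<forall>u. u \<notin> set L \<longrightarrow> sp st' u = sp st u \<and> sm st' u = sm st u"
        "\<forall>u\<in>set L. (sp st' u = 1 \<or> sp st' u = -1) \<and> (sm st' u = 1 \<or> sm st' u = -1)"
        using SL[OF Lp(1) dis, of \<beta> N h U] unfolding st'_def by blast+
      have sep: "\<forall>u\<in>Vs st. (\<exists>x\<in>Lam N - Vs st. adj u x) \<longrightarrow> sp st u \<le> sm st u"
      proof (intro ballI impI)
        fix u assume u: "u \<in> Vs st" and ex: "\<exists>x\<in>Lam N - Vs st. adj u x"
        have "u \<notin> Cst st" using c2(2) ex by blast
        then show "sp st u \<le> sm st u" using u unfolding Cst_def by auto
      qed
      have new: "\<forall>u\<in>set L. sp st' u \<le> sm st' u"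
        unfolding st'_def by (rule SLF[OF \<beta>]) (use Lp VL pm c2 sep in auto)
      define st'' where "st'' = st'\<lparr>Ak := {}, stg := Suc (stg st), fin := True\<rparr>"
      have stage_eq: "stage \<beta> N h U pick st = st''"
        unfolding stage_def st''_def st'_def L_def using nf True by (simp add: Let_def)
      have C: "Cst st'' = Cst st"
      proof -
        have "Cst st'' = {u \<in> Vs st \<union> set L. sp st' u > sm st' u}" unfolding Cst_def st''_def using S by simp
        also have "\<dots> = Cst st"
          unfolding Cst_def using S(2) new dis by force
        finally show ?thesis .
      qed
      show ?thesis unfolding stage_eq Inv_def C
      proof (intro conjI)
        show "Vs st'' \<subseteq> Lam N" using S VL Lp unfolding st''_def by auto
        show "\<forall>u\<in>Vs st''. (sp st'' u = 1 \<or> sp st'' u = - 1) \<and> (sm st'' u = 1 \<or> sm st'' u = - 1)"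
        proof
          fix u assume u: "u \<in> Vs st''"
          show "(sp st'' u = 1 \<or> sp st'' u = - 1) \<and> (sm st'' u = 1 \<or> sm st'' u = - 1)"
          proof (cases "u \<in> set L")
            case True then show ?thesis using S(3) unfolding st''_def by simp
          next
            case False
            then have "u \<in> Vs st" "sp st' u = sp st u" "sm st' u = sm st u" using u S unfolding st''_def by auto
            then show ?thesis using pm unfolding st''_def by simp
          qed
        qed
        show "\<forall>u. u \<notin> Vs st'' \<longrightarrow> sp st'' u = 0 \<and> sm st'' u = 0"
          using S z unfolding st''_def by auto
        show "\<forall>u\<in>Cst st. haspath N (Cst st) u" by (rule pa)
      qed (simp add: st''_def)
    next
      case False
      define S where "S = {v \<in> Lam N. v \<notin> Vs st \<and> (\<exists>a\<in>Ak st. adj a v)}"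
      define L where "L = pick (Suc (stg st)) S"
      have fS: "finite S" unfolding S_def by simp
      have Lp: "distinct L" "set L = S" using pk fS unfolding L_def by auto
      define st' where "st' = sample_list \<beta> N h U L st"
      have dis: "set L \<inter> Vs st = {}" using Lp unfolding S_def by auto
      have SS: "Vs st' = Vs st \<union> S"
        "\<forall>u. u \<notin> S \<longrightarrow> sp st' u = sp st u \<and> sm st' u = sm st u"
        "\<forall>u\<in>S. (sp st' u = 1 \<or> sp st' u = -1) \<and> (sm st' u = 1 \<or> sm st' u = -1)"
        using SL[OF Lp(1) dis, of \<beta> N h U] Lp(2) unfolding st'_def by blast+
      define A' where "A' = {v \<in> S. sp st' v > sm st' v}"
      define st'' where "st'' = st'\<lparr>Ak := A', stg := Suc (stg st)\<rparr>"
      have stage_eq: "stage \<beta> N h U pick st = st''"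
        unfolding stage_def st''_def st'_def L_def S_def A'_def using nf False by (simp add: Let_def)
      have SV: "S \<inter> Vs st = {}" unfolding S_def by auto
      have C: "Cst st'' = Cst st \<union> A'"
        unfolding Cst_def st''_def A'_def using SS(1,2) SV by auto
      have finst: "\<not> fin st''" unfolding st''_def st'_def using SL[OF Lp(1) dis, of \<beta> N h U] nf by simp
      have case12: "(Vs st = {} \<and> Ak st = bdry (Lam N)) \<or> (outer N \<subseteq> Vs st \<and> Ak st \<subseteq> Cst st \<and> (\<forall>u\<in>Cst st. u \<in> Ak st \<or> (\<forall>x\<in>Lam N. adj u x \<longrightarrow> x \<in> Vs st)))"
        using fr nf by blast
      have Cst0: "Vs st = {} \<Longrightarrow> Cst st = {}" unfolding Cst_def by simp
      have paths: "\<forall>u\<in>Cst st''. haspath N (Cst st'') u"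
      proof
        fix u assume u: "u \<in> Cst st''"
        show "haspath N (Cst st'') u"
        proof (cases "u \<in> Cst st")
          case True
          then show ?thesis using pa C haspath_mono[of "Cst st" "Cst st''"] by blast
        next
          case uf: False
          then have uA: "u \<in> A'" using u C by blast
          then obtain a where a: "a \<in> Ak st" "adj a u" unfolding A'_def S_def by blast
          have uC: "u \<in> Cst st''" using uA C by blast
          from case12 show ?thesis
          proof
            assume c1: "Vs st = {} \<and> Ak st = bdry (Lam N)"
            show ?thesis by (rule haspath_base[OF uC]) (use a c1 adj_sym in auto)
          next
            assume c2: "outer N \<subseteq> Vs st \<and> Ak st \<subseteq> Cst st \<and> (\<forall>u\<in>Cst st. u \<in> Ak st \<or> (\<forall>x\<in>Lam N. adj u x \<longrightarrow> x \<in> Vs st))"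
            then have "haspath N (Cst st) a" using a pa by blast
            then have "haspath N (Cst st'') a" using C haspath_mono[of "Cst st" "Cst st''"] by blast
            then show ?thesis using haspath_cons[OF uC] a(2) adj_sym by metis
          qed
        qed
      qed
      have front: "outer N \<subseteq> Vs st'' \<and> Ak st'' \<subseteq> Cst st'' \<and> (\<forall>u\<in>Cst st''. u \<in> Ak st'' \<or> (\<forall>x\<in>Lam N. adj u x \<longrightarrow> x \<in> Vs st''))"
      proof (intro conjI)
        have Vs'': "Vs st'' = Vs st \<union> S" unfolding st''_def using SS by simp
        show "outer N \<subseteq> Vs st''"
          using case12
        proof
          assume c1: "Vs st = {} \<and> Ak st = bdry (Lam N)"
          show ?thesis unfolding Vs'' S_def outer_def using c1 adj_sym by auto
        next
          assume "outer N \<subseteq> Vs st \<and> Ak st \<subseteq> Cst st \<and> (\<forall>u\<in>Cst st. u \<in> Ak st \<or> (\<forall>x\<in>Lam N. adj u x \<longrightarrow> x \<in> Vs st))"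
          then show ?thesis unfolding Vs'' by auto
        qed
        show "Ak st'' \<subseteq> Cst st''" unfolding C by (simp add: st''_def)
        show "\<forall>u\<in>Cst st''. u \<in> Ak st'' \<or> (\<forall>x\<in>Lam N. adj u x \<longrightarrow> x \<in> Vs st'')"
        proof
          fix u assume u: "u \<in> Cst st''"
          show "u \<in> Ak st'' \<or> (\<forall>x\<in>Lam N. adj u x \<longrightarrow> x \<in> Vs st'')"
          proof (cases "u \<in> A'")
            case True then show ?thesis by (simp add: st''_def)
          next
            case False
            then have uC: "u \<in> Cst st" using u C by blast
            then have ne: "Vs st \<noteq> {}" using Cst0 by blast
            then have c2: "\<forall>u\<in>Cst st. u \<in> Ak st \<or> (\<forall>x\<in>Lam N. adj u x \<longrightarrow> x \<in> Vs st)"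
              using case12 by blast
            have "\<forall>x\<in>Lam N. adj u x \<longrightarrow> x \<in> Vs st \<union> S"
              using c2 uC unfolding S_def by blast
            then show ?thesis unfolding Vs'' by blast
          qed
        qed
      qed
      show ?thesis unfolding stage_eq Inv_def
      proof (intro conjI)
        show "Vs st'' \<subseteq> Lam N" using SS VL unfolding st''_def S_def by auto
        show "\<forall>u\<in>Vs st''. (sp st'' u = 1 \<or> sp st'' u = - 1) \<and> (sm st'' u = 1 \<or> sm st'' u = - 1)"
        proof
          fix u assume u: "u \<in> Vs st''"
          show "(sp st'' u = 1 \<or> sp st'' u = - 1) \<and> (sm st'' u = 1 \<or> sm st'' u = - 1)"
          proof (cases "u \<in> S")
            case True then show ?thesis using SS(3) unfolding st''_def by simp
          next
            case False
            then have "u \<in> Vs st" "sp st' u = sp st u" "sm st' u = sm st u" using u SS unfolding st''_def by auto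
            then show ?thesis using pm unfolding st''_def by simp
          qed
        qed
        show "\<forall>u. u \<notin> Vs st'' \<longrightarrow> sp st'' u = 0 \<and> sm st'' u = 0"
          using SS z unfolding st''_def by auto
        show "\<forall>u\<in>Cst st''. haspath N (Cst st'') u" by (rule paths)
      qed (use front in blast)
    qed
  qed
qed


lemma Inv_iter:
  assumes "\<beta> > 0" "\<forall>k S. finite S \<longrightarrow> distinct (pick k S) \<and> set (pick k S) = S"
  shows "Inv N ((stage \<beta> N h U pick ^^ k) (init_state N))"
proof (induction k)
  case 0 then show ?case using Inv_init by simp
next
  case (Suc k) then show ?case using Inv_stage[OF assms] by simp
qed

theorem lemma3p19:
  fixes \<beta> :: real and N :: nat and h :: "vtx \<Rightarrow> real" and U :: "nat \<Rightarrow> real"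
    and pick :: "nat \<Rightarrow> vtx set \<Rightarrow> vtx list"
  assumes "\<beta> > 0"
    and "\<forall>n. 0 \<le> U n \<and> U n \<le> 1"
    and "\<forall>k S. finite S \<longrightarrow> distinct (pick k S) \<and> set (pick k S) = S"
    and "origin \<in> Cset \<beta> N h U pick"
  shows "\<exists>p. p \<noteq> [] \<and> hd p = origin \<and> set p \<subseteq> Cset \<beta> N h U pick
           \<and> (\<forall>i. Suc i < length p \<longrightarrow> adj (p ! i) (p ! Suc i))
           \<and> (\<exists>w\<in>bdry (Lam N). adj (last p) w)"
proof -
  define st where "st = final_state \<beta> N h U pick"
  have I: "Inv N st" unfolding st_def final_state_def by (rule Inv_iter[OF assms(1,3)])
  have CS: "Cset \<beta> N h U pick = {v \<in> Lam N. sp st v > sm st v}"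
    unfolding Cset_def st_def by (simp add: Let_def)
  have VL: "Vs st \<subseteq> Lam N" and z: "\<forall>u. u \<notin> Vs st \<longrightarrow> sp st u = 0 \<and> sm st u = 0"
    and pa: "\<forall>u\<in>Cst st. haspath N (Cst st) u" using I unfolding Inv_def by blast+
  have CC: "Cst st = Cset \<beta> N h U pick"
    unfolding CS Cst_def using VL z by force
  have "origin \<in> Cst st" using assms(4) CC by simp
  then have "haspath N (Cset \<beta> N h U pick) origin" using pa CC by metis
  then show ?thesis unfolding haspath_def .
qed

end
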